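(* Let $1\le m\le n$ and set $A_{i,m}=\prod_{j=m,\,j\ne i}^n\frac{tx_i-x_j}{x_i-x_j}$ for $m\le i\le n$. Then for every symmetric Laurent polynomial $f$ in $x_1,\dots,x_n$, $$\sum_{i=m}^n D_if=\sum_{i=m}^n A_{i,m}\,x_i^{-1}\bigl(f-\tau_if\bigr).$$
   Context: Let $n\ge1$, $q,t$ generic parameters; operators act on Laurent polynomials (or rational functions) in $x=(x_1,\dots,x_n)$ over $\mathbb{Q}(q,t)$. Let $s_i$ interchange $x_i,x_{i+1}$, $(\tau_if)(x)=f(x_1,\dots,qx_i,\dots,x_n)$, $T_i=t+\frac{tx_i-x_{i+1}}{x_i-x_{i+1}}(s_i-1)$ (invertible, $T_i^{-1}=t^{-1}-1+t^{-1}T_i$), $\omega=s_{n-1}\cdots s_1\tau_1$, $Y_i=t^{-n+i}T_i\cdots T_{n-1}\,\omega\,T_1^{-1}\cdots T_{i-1}^{-1}$, $T_{ij}^{-1}=T_i^{-1}\cdots T_{j-2}^{-1}T_{j-1}^{-1}T_{j-2}^{-1}\cdots T_i^{-1}$ for $i<j$, and $D_i=x_i^{-1}\bigl(1-t^{n-1}[1+(t^{-1}-1)\sum_{j=i+1}^n t^{j-i}T_{ij}^{-1}]Y_i\bigr)$, $1\le i\le n$. *)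

theory Defs
  imports "HOL-Combinatorics.Permutations"
begin

text \<open>Functions of x = (x_1,...,x_n) are modelled as maps from points
  (nat \<Rightarrow> 'a), only coordinates 1..n being relevant, to the field 'a
  (playing the role of the coefficient field Q(q,t)).\<close>

type_synonym 'a fn = "(nat \<Rightarrow> 'a) \<Rightarrow> 'a"

definition sop :: "nat \<Rightarrow> 'a fn \<Rightarrow> 'a fn" where
  "sop i f = (\<lambda>x. f (x(i := x (Suc i), Suc i := x i)))"

definition tauop :: "'a::field \<Rightarrow> nat \<Rightarrow> 'a fn \<Rightarrow> 'a fn" where
  "tauop q i f = (\<lambda>x. f (x(i := q * x i)))"

definition Top :: "'a::field \<Rightarrow> nat \<Rightarrow> 'a fn \<Rightarrow> 'a fn" where
  "Top t i f = (\<lambda>x. t * f x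
      + (t * x i - x (Suc i)) / (x i - x (Suc i)) * (sop i f x - f x))"

definition Tinv :: "'a::field \<Rightarrow> nat \<Rightarrow> 'a fn \<Rightarrow> 'a fn" where
  "Tinv t i f = (\<lambda>x. (inverse t - 1) * f x + inverse t * Top t i f x)"

definition compose :: "('b \<Rightarrow> 'b) list \<Rightarrow> 'b \<Rightarrow> 'b" where
  "compose ops = foldr (\<circ>) ops id"

definition omega :: "nat \<Rightarrow> 'a::field \<Rightarrow> 'a fn \<Rightarrow> 'a fn" where
  "omega n q = compose (map sop (rev [1..<n]) @ [tauop q 1])"

definition Yop :: "nat \<Rightarrow> 'a::field \<Rightarrow> 'a \<Rightarrow> nat \<Rightarrow> 'a fn \<Rightarrow> 'a fn" where
  "Yop n q t i f = (\<lambda>x. t powi (int i - int n) *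
     compose (map (Top t) [i..<n] @ [omega n q] @ map (Tinv t) [1..<i]) f x)"

definition Tijinv :: "'a::field \<Rightarrow> nat \<Rightarrow> nat \<Rightarrow> 'a fn \<Rightarrow> 'a fn" where
  "Tijinv t i j = compose (map (Tinv t) [i..<j - 1] @ [Tinv t (j - 1)]
                           @ map (Tinv t) (rev [i..<j - 1]))"

definition Dop :: "nat \<Rightarrow> 'a::field \<Rightarrow> 'a \<Rightarrow> nat \<Rightarrow> 'a fn \<Rightarrow> 'a fn" where
  "Dop n q t i f = (\<lambda>x. inverse (x i) *
     (f x - t ^ (n - 1) *
        (Yop n q t i f x + (inverse t - 1) *
           (\<Sum>j = Suc i..n. t ^ (j - i) * Tijinv t i j (Yop n q t i f) x))))"

definition laurent_poly :: "nat \<Rightarrow> 'a::field fn \<Rightarrow> bool" where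
  "laurent_poly n f \<longleftrightarrow> (\<exists>(S :: (nat \<Rightarrow> int) set) c. finite S \<and>
      (\<forall>\<alpha>\<in>S. \<forall>i. i \<notin> {1..n} \<longrightarrow> \<alpha> i = 0) \<and>
      (\<forall>x. f x = (\<Sum>\<alpha>\<in>S. c \<alpha> * (\<Prod>i\<in>{1..n}. x i powi \<alpha> i))))"

definition symmetric_fn :: "nat \<Rightarrow> 'a fn \<Rightarrow> bool" where
  "symmetric_fn n f \<longleftrightarrow> (\<forall>\<sigma> x. \<sigma> permutes {1..n} \<longrightarrow> f (x \<circ> \<sigma>) = f x)"

definition Acoef :: "nat \<Rightarrow> 'a::field \<Rightarrow> nat \<Rightarrow> nat \<Rightarrow> (nat \<Rightarrow> 'a) \<Rightarrow> 'a" where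
  "Acoef n t i m x = (\<Prod>j\<in>{m..n} - {i}. (t * x i - x j) / (x i - x j))"

text \<open>generic point: no denominator occurring anywhere can vanish\<close>
definition generic_point :: "nat \<Rightarrow> 'a::field \<Rightarrow> (nat \<Rightarrow> 'a) \<Rightarrow> bool" where
  "generic_point n q x \<longleftrightarrow> (\<forall>i\<in>{1..n}. x i \<noteq> 0) \<and>
     (\<forall>i\<in>{1..n}. \<forall>j\<in>{1..n}. i \<noteq> j \<longrightarrow> (\<forall>k::int. x i \<noteq> q powi k * x j))"

end

theory Submission
  imports Defs
begin


definition swp :: "nat \<Rightarrow> (nat \<Rightarrow> 'a) \<Rightarrow> nat \<Rightarrow> 'a" where
  "swp i y = y(i := y (Suc i), Suc i := y i)"

definition dst :: "nat \<Rightarrow> (nat \<Rightarrow> 'a) \<Rightarrow> bool" where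
  "dst n y \<longleftrightarrow> (\<forall>a\<in>{1..n}. \<forall>b\<in>{1..n}. a \<noteq> b \<longrightarrow> y a \<noteq> y b)"

definition eqd :: "nat \<Rightarrow> 'a fn \<Rightarrow> 'a fn \<Rightarrow> bool" where
  "eqd n g h \<longleftrightarrow> (\<forall>y. dst n y \<longrightarrow> g y = h y)"

lemma swp_comp: "swp i y = y \<circ> Transposition.transpose i (Suc i)"
  by (auto simp: swp_def fun_eq_iff Transposition.transpose_def)

lemma swp_i [simp]: "swp i y i = y (Suc i)" and swp_Si [simp]: "swp i y (Suc i) = y i"
  and swp_swp [simp]: "swp i (swp i y) = y"
  by (auto simp: swp_def fun_eq_iff)

lemma swp_other [simp]: "k \<noteq> i \<Longrightarrow> k \<noteq> Suc i \<Longrightarrow> swp i y k = y k"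
  by (simp add: swp_def)

lemma sop_swp: "sop i f = (\<lambda>y. f (swp i y))"
  by (simp add: sop_def swp_def)

lemma Top_swp: "Top t i f = (\<lambda>x. t * f x
      + (t * x i - x (Suc i)) / (x i - x (Suc i)) * (f (swp i x) - f x))"
  by (simp add: Top_def sop_swp)

lemma dst_swp: assumes "1 \<le> i" "i < n" "dst n y" shows "dst n (swp i y)"
  unfolding dst_def
proof (intro ballI impI)
  fix a b assume ab: "a \<in> {1..n}" "b \<in> {1..n}" "a \<noteq> b"
  let ?s = "Transposition.transpose i (Suc i)"
  have "?s a \<in> {1..n}" "?s b \<in> {1..n}" "?s a \<noteq> ?s b" using ab assms
    by (auto simp: Transposition.transpose_def)
  then show "swp i y a \<noteq> swp i y b" using assms(3) by (simp add: swp_comp dst_def)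
qed

lemma comp_upd: "inj s \<Longrightarrow> (y \<circ> s)(k := v) = (y(s k := v)) \<circ> s"
  by (auto simp: fun_eq_iff inj_def)

lemma sym_perm: "symmetric_fn n f \<Longrightarrow> 1 \<le> i \<Longrightarrow> i < n
   \<Longrightarrow> f (y \<circ> Transposition.transpose i (Suc i)) = f y"
proof -
  assume a: "symmetric_fn n f" "1 \<le> i" "i < n"
  have "Transposition.transpose i (Suc i) permutes {1..n}"
    by (rule permutes_swap_id) (use a in auto)
  then show ?thesis using a(1) unfolding symmetric_fn_def by blast
qed

lemma sym_sop: "symmetric_fn n f \<Longrightarrow> 1 \<le> i \<Longrightarrow> i < n \<Longrightarrow> sop i f = f"
  by (simp add: sop_swp swp_comp sym_perm fun_eq_iff)

lemma sym_tau_swp: assumes "symmetric_fn n f" "1 \<le> i" "i < n"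
  shows "f ((swp i y)(k := q * swp i y k))
     = f (y(Transposition.transpose i (Suc i) k := q * y (Transposition.transpose i (Suc i) k)))"
proof -
  let ?s = "Transposition.transpose i (Suc i)"
  have "(swp i y)(k := q * swp i y k) = (y(?s k := q * y (?s k))) \<circ> ?s"
    unfolding swp_comp by (subst comp_upd) (auto simp: inj_transpose)
  then show ?thesis using sym_perm[OF assms] by simp
qed


lemma compose_Nil [simp]: "compose [] = id" by (simp add: compose_def)
lemma compose_Cons [simp]: "compose (a # L) g = a (compose L g)" by (simp add: compose_def)
lemma compose_append [simp]: "compose (L1 @ L2) g = compose L1 (compose L2 g)"
proof -
  have h: "\<And>h. foldr (\<circ>) L1 h = compose L1 \<circ> h" by (induction L1) (auto simp: compose_def)
  show ?thesis unfolding compose_def foldr_append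
    using h[of "foldr (\<circ>) L2 id"] unfolding compose_def by (metis comp_apply)
qed

lemma Top_cong: assumes "1 \<le> i" "i < n" "eqd n g h" shows "eqd n (Top t i g) (Top t i h)"
  using assms dst_swp[OF assms(1,2)] by (auto simp: eqd_def Top_swp)

lemma Tinv_cong: assumes "1 \<le> i" "i < n" "eqd n g h" shows "eqd n (Tinv t i g) (Tinv t i h)"
  using Top_cong[OF assms] assms(3) by (auto simp: eqd_def Tinv_def)

lemma eqd_trans [trans]: "eqd n a b \<Longrightarrow> eqd n b c \<Longrightarrow> eqd n a c" by (simp add: eqd_def)
lemma eqd_refl: "eqd n a a" by (simp add: eqd_def)
lemma eqd_eq: "a = b \<Longrightarrow> eqd n a b" by (simp add: eqd_def)

lemma compose_Tinv_cong: "(\<forall>l\<in>set L. 1 \<le> l \<and> l < n) \<Longrightarrow> eqd n g h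
   \<Longrightarrow> eqd n (compose (map (Tinv t) L) g) (compose (map (Tinv t) L) h)"
  by (induction L) (auto intro: Tinv_cong)

lemma Tinv_Top: assumes "t \<noteq> 0" "y i \<noteq> y (Suc i)"
  shows "Tinv t i (Top t i g) y = g y"
proof -
  define a where "a = y i"
  define b where "b = y (Suc i)"
  define G where "G = g y"
  define G' where "G' = g (swp i y)"
  have ab: "a - b \<noteq> 0" "b - a \<noteq> 0" using assms(2) by (auto simp: a_def b_def)
  define c where "c = (t * a - b) / (a - b)"
  have c': "(t * b - a) / (b - a) = t + 1 - c" using ab by (simp add: c_def field_simps)
  have "Tinv t i (Top t i g) y =
     (inverse t - 1) * (t * G + c * (G' - G)) + inverse t *
     (t * (t * G + c * (G' - G)) + c *
       ((t * G' + (t * b - a) / (b - a) * (G - G')) - (t * G + c * (G' - G))))"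
    by (simp add: Tinv_def Top_swp a_def b_def G_def G'_def c_def)
  also have "\<dots> = G" unfolding c' using assms(1) by (simp add: field_simps)
  finally show ?thesis by (simp add: G_def)
qed

lemma Top_lin: "Top t i (\<lambda>y. c * g y) = (\<lambda>y. c * Top t i g y)"
  by (simp add: Top_swp fun_eq_iff algebra_simps)
lemma Tinv_lin: "Tinv t i (\<lambda>y. c * g y) = (\<lambda>y. c * Tinv t i g y)"
  by (simp add: Tinv_def Top_lin fun_eq_iff algebra_simps)
lemma compose_Top_lin: "compose (map (Top t) L) (\<lambda>y. c * g y) = (\<lambda>y. c * compose (map (Top t) L) g y)"
  by (induction L) (simp_all add: Top_lin)
lemma compose_Tinv_lin: "compose (map (Tinv t) L) (\<lambda>y. c * g y) = (\<lambda>y. c * compose (map (Tinv t) L) g y)"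
  by (induction L) (simp_all add: Tinv_lin)

lemma Top_inv: "sop i g = g \<Longrightarrow> Top t i g = (\<lambda>y. t * g y)"
  by (simp add: Top_def fun_eq_iff)
lemma Tinv_inv: "t \<noteq> 0 \<Longrightarrow> sop i g = g \<Longrightarrow> Tinv t i g = (\<lambda>y. inverse t * g y)"
  by (simp add: Tinv_def Top_inv fun_eq_iff field_simps)

lemma compose_Tinv_inv: "t \<noteq> 0 \<Longrightarrow> (\<forall>l\<in>{a..<b}. sop l g = g) \<Longrightarrow>
   compose (map (Tinv t) [a..<b]) g = (\<lambda>y. inverse t ^ (b - a) * g y)"
proof (induction b)
  case 0 then show ?case by simp
next
  case (Suc b)
  show ?case
  proof (cases "a \<le> b")
    case True
    have "compose (map (Tinv t) [a..<Suc b]) g = compose (map (Tinv t) [a..<b]) (Tinv t b g)"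
      using True by simp
    also have "Tinv t b g = (\<lambda>y. inverse t * g y)" using Suc.prems True by (simp add: Tinv_inv)
    also have "compose (map (Tinv t) [a..<b]) \<dots> = (\<lambda>y. inverse t * compose (map (Tinv t) [a..<b]) g y)"
      by (rule compose_Tinv_lin)
    also have "\<dots> = (\<lambda>y. inverse t ^ (Suc b - a) * g y)" using Suc True
      by (simp add: Suc_diff_le mult.assoc)
    finally show ?thesis .
  qed (simp)
qed


definition rep :: "nat \<Rightarrow> 'a::field \<Rightarrow> 'a fn \<Rightarrow> (nat \<Rightarrow> (nat \<Rightarrow> 'a) \<Rightarrow> 'a) \<Rightarrow> 'a fn" where
  "rep n q f C = (\<lambda>y. \<Sum>k\<in>{1..n}. C k y * f (y(k := q * y k)))"

definition TC :: "'a::field \<Rightarrow> nat \<Rightarrow> (nat \<Rightarrow> (nat \<Rightarrow> 'a) \<Rightarrow> 'a) \<Rightarrow> nat \<Rightarrow> (nat \<Rightarrow> 'a) \<Rightarrow> 'a" where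
  "TC t i C k y = t * C k y + (t * y i - y (Suc i)) / (y i - y (Suc i)) *
      (C (Transposition.transpose i (Suc i) k) (swp i y) - C k y)"

lemma rep_Top: assumes "symmetric_fn n f" "1 \<le> i" "i < n"
  shows "Top t i (rep n q f C) y = rep n q f (TC t i C) y"
proof -
  let ?s = "Transposition.transpose i (Suc i)"
  let ?F = "\<lambda>k. f (y(k := q * y k))"
  have bij: "bij_betw ?s {1..n} {1..n}"
    using permutes_swap_id[of i "{1..n}" "Suc i"] assms(2,3) permutes_imp_bij by fastforce
  have "rep n q f C (swp i y) = (\<Sum>k\<in>{1..n}. C k (swp i y) * ?F (?s k))"
    unfolding rep_def using sym_tau_swp[OF assms] by simp
  also have "\<dots> = (\<Sum>k\<in>{1..n}. C (?s k) (swp i y) * ?F k)"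
    using sum.reindex_bij_betw[OF bij, of "\<lambda>k. C (?s k) (swp i y) * ?F k"] by simp
  finally have e: "rep n q f C (swp i y) = (\<Sum>k\<in>{1..n}. C (?s k) (swp i y) * ?F k)" .
  define c where "c = (t * y i - y (Suc i)) / (y i - y (Suc i))"
  have "rep n q f (TC t i C) y = (\<Sum>k\<in>{1..n}. t * (C k y * ?F k) + (c * (C (?s k) (swp i y) * ?F k) - c * (C k y * ?F k)))"
    unfolding rep_def TC_def c_def[symmetric] by (rule sum.cong) (simp_all add: algebra_simps)
  also have "\<dots> = t * rep n q f C y + (c * rep n q f C (swp i y) - c * rep n q f C y)"
    unfolding e unfolding rep_def
    by (simp add: sum.distrib sum_subtractf sum_distrib_left)
  finally have r: "rep n q f (TC t i C) y = t * rep n q f C y + (c * rep n q f C (swp i y) - c * rep n q f C y)" .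
  show ?thesis unfolding Top_swp c_def[symmetric] r by (simp add: right_diff_distrib)
qed

lemma omega_sym: assumes "symmetric_fn n f" "1 \<le> m" "m \<le> n"
  shows "compose (map sop (rev [1..<m]) @ [tauop q 1]) f = tauop q m f"
  using assms(2,3)
proof (induction m)
  case 0 then show ?case by simp
next
  case (Suc m)
  show ?case
  proof (cases "m = 0")
    case True then show ?thesis by simp
  next
    case False
    then have m1: "1 \<le> m" by simp
    have "[1..<Suc m] = [1..<m] @ [m]" using m1 by simp
    then have "compose (map sop (rev [1..<Suc m]) @ [tauop q 1]) f
       = sop m (compose (map sop (rev [1..<m]) @ [tauop q 1]) f)" by simp
    also have "\<dots> = sop m (tauop q m f)" using Suc m1 by simp
    also have "\<dots> = tauop q (Suc m) f"
      unfolding sop_swp tauop_def fun_eq_iff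
      using sym_tau_swp[OF assms(1) m1, where k=m and q=q] Suc.prems by simp
    finally show ?thesis .
  qed
qed

lemma omega_eq: "symmetric_fn n f \<Longrightarrow> 1 \<le> n \<Longrightarrow> omega n q f = tauop q n f"
  unfolding omega_def using omega_sym[of n f n q] by simp


definition hh :: "nat \<Rightarrow> 'a::field \<Rightarrow> 'a \<Rightarrow> 'a fn \<Rightarrow> nat \<Rightarrow> 'a fn" where
  "hh n q t f j = compose (map (Top t) [j..<n]) (tauop q n f)"

definition H :: "nat \<Rightarrow> 'a::field \<Rightarrow> nat \<Rightarrow> nat \<Rightarrow> (nat \<Rightarrow> 'a) \<Rightarrow> 'a" where
  "H n t j k y = (if k = j then Acoef n t j (Suc j) y
      else if j < k \<and> k \<le> n then (t - 1) * y k / (y k - y j) * Acoef n t k (Suc j) y else 0)"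

lemma hh_step: "j < n \<Longrightarrow> hh n q t f j = Top t j (hh n q t f (Suc j))"
  by (simp add: hh_def upt_conv_Cons)
lemma hh_n: "hh n q t f n = tauop q n f"
  by (simp add: hh_def)

lemma Acoef_split: assumes "a \<le> n" "a \<noteq> k"
  shows "Acoef n t k a y = (t * y k - y a) / (y k - y a) * Acoef n t k (Suc a) y"
proof -
  have "{a..n} - {k} = insert a ({Suc a..n} - {k})" using assms by auto
  then show ?thesis unfolding Acoef_def by simp
qed

lemma Acoef_skip: "Acoef n t k k y = Acoef n t k (Suc k) y"
proof -
  have "{k..n} - {k} = {Suc k..n} - {k}" by auto
  then show ?thesis unfolding Acoef_def by simp
qed

lemma Acoef_swp_other: assumes "Suc j < a" "k \<noteq> j" "k \<noteq> Suc j"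
  shows "Acoef n t k a (swp j y) = Acoef n t k a y"
  unfolding Acoef_def using assms by (intro prod.cong) auto

lemma Acoef_swp_Suc: assumes "Suc j < a"
  shows "Acoef n t (Suc j) a (swp j y) = Acoef n t j a y"
proof -
  have "{a..n} - {Suc j} = {a..n} - {j}" using assms by auto
  then show ?thesis unfolding Acoef_def using assms by (intro prod.cong) auto
qed

lemma field_id1: fixes a b c t Z :: "'a::field" assumes "a - b \<noteq> 0" "c - a \<noteq> 0" "c - b \<noteq> 0"
  shows "t*((t-1)*c/(c-b)*Z) + (t*a-b)/(a-b)*((t-1)*c/(c-a)*Z - (t-1)*c/(c-b)*Z) = (t-1)*c/(c-a)*((t*c-b)/(c-b)*Z)"
proof -
  define P where "P = (t-1)*c*Z"
  define D where "D = (c-a)*(c-b)"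
  have D: "D \<noteq> 0" using assms by (simp add: D_def)
  have e: "(t-1)*c/(c-a)*Z - (t-1)*c/(c-b)*Z = P*(a-b)/D"
    using assms by (simp add: field_simps P_def D_def)
  have f: "(t*a-b)/(a-b)*(P*(a-b)/D) = (t*a-b)*P/D"
    using assms D by (simp add: field_simps)
  have g0: "t*(c-a)*P/D = ((c-a)*(t*P))/((c-a)*(c-b))" by (simp add: D_def ac_simps)
  have g: "t*((t-1)*c/(c-b)*Z) = t*(c-a)*P/D" unfolding g0 
    using assms by (subst nonzero_mult_divide_mult_cancel_left) (simp_all add: P_def)
  have h: "(t-1)*c/(c-a)*((t*c-b)/(c-b)*Z) = (t*c-b)*P/D" by (simp add: P_def D_def ac_simps)
  have i: "t*(c-a)*P/D + (t*a-b)*P/D = (t*c-b)*P/D"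
    by (simp add: add_divide_distrib[symmetric] algebra_simps)
  show ?thesis unfolding e f g h i ..
qed

lemma coef_step: assumes "1 \<le> j" "j < n" "dst n y" "k \<in> {1..n}"
  shows "TC t j (H n t (Suc j)) k y = H n t j k y"
proof -
  let ?s = "Transposition.transpose j (Suc j)"
  have d: "\<And>a b. a \<in> {1..n} \<Longrightarrow> b \<in> {1..n} \<Longrightarrow> a \<noteq> b \<Longrightarrow> y a - y b \<noteq> 0"
    using assms(3) by (auto simp: dst_def)
  have dj: "y j - y (Suc j) \<noteq> 0" "y (Suc j) - y j \<noteq> 0" using d assms(1,2) by auto
  consider "k < j" | "k = j" | "k = Suc j" | "Suc j < k" by linarith
  then show ?thesis
  proof cases
    case 1
    then show ?thesis by (simp add: TC_def H_def)
  next
    case 2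
    have "TC t j (H n t (Suc j)) k y = (t * y j - y (Suc j)) / (y j - y (Suc j)) * Acoef n t j (Suc (Suc j)) y"
      using 2 by (simp add: TC_def H_def Acoef_swp_Suc)
    also have "\<dots> = H n t j k y" using 2 assms by (simp add: H_def Acoef_split[of "Suc j" n j])
    finally show ?thesis .
  next
    case 3
    define Z where "Z = Acoef n t (Suc j) (Suc (Suc j)) y"
    have "TC t j (H n t (Suc j)) k y = t * Z - (t * y j - y (Suc j)) / (y j - y (Suc j)) * Z"
      using 3 by (simp add: TC_def H_def Z_def)
    also have "\<dots> = (t - 1) * y (Suc j) / (y (Suc j) - y j) * Z"
      using dj by (simp add: field_simps)
    also have "\<dots> = H n t j k y" using 3 assms by (simp add: H_def Acoef_skip Z_def)
    finally show ?thesis .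
  next
    case 4
    define Z where "Z = Acoef n t k (Suc (Suc j)) y"
    have kn: "k \<le> n" using assms(4) by simp
    have dk: "y k - y j \<noteq> 0" "y k - y (Suc j) \<noteq> 0" using d assms 4 by auto
    have "TC t j (H n t (Suc j)) k y = t * ((t - 1) * y k / (y k - y (Suc j)) * Z)
       + (t * y j - y (Suc j)) / (y j - y (Suc j)) *
          ((t - 1) * y k / (y k - y j) * Z - (t - 1) * y k / (y k - y (Suc j)) * Z)"
      using 4 kn by (simp add: TC_def H_def Z_def Acoef_swp_other)
    also have "\<dots> = (t - 1) * y k / (y k - y j) * ((t * y k - y (Suc j)) / (y k - y (Suc j)) * Z)"
      using field_id1[OF dj(1) dk] .
    also have "\<dots> = H n t j k y" using 4 kn assms by (simp add: H_def Z_def Acoef_split[of "Suc j" n k])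
    finally show ?thesis .
  qed
qed


lemma rep_H_n: "1 \<le> n \<Longrightarrow> rep n q f (H n t n) = tauop q n f"
proof -
  assume n: "1 \<le> n"
  have "Acoef n t n (Suc n) y = 1" for y by (simp add: Acoef_def)
  then have "rep n q f (H n t n) y = (\<Sum>k\<in>{1..n}. (if k = n then f (y(n := q * y n)) else 0))" for y
    unfolding rep_def H_def by (intro sum.cong) auto
  then show ?thesis using n by (simp add: fun_eq_iff tauop_def)
qed

lemma hh_rep: assumes "symmetric_fn n f" "1 \<le> j" "j \<le> n"
  shows "eqd n (hh n q t f j) (rep n q f (H n t j))"
  using assms(3,2)
proof (induction j rule: inc_induct)
  case base
  then show ?case by (simp add: hh_n rep_H_n eqd_def)
next
  case (step j)
  have "eqd n (hh n q t f j) (Top t j (rep n q f (H n t (Suc j))))"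
    unfolding hh_step[OF step(2)] using step by (intro Top_cong) auto
  also have "Top t j (rep n q f (H n t (Suc j))) = rep n q f (TC t j (H n t (Suc j)))"
    using rep_Top[OF assms(1)] step by (simp add: fun_eq_iff)
  also have "eqd n \<dots> (rep n q f (H n t j))"
    unfolding eqd_def rep_def
  proof (intro allI impI sum.cong refl)
    fix y :: "nat \<Rightarrow> 'a" and k assume "dst n y" "k \<in> {1..n}"
    then show "TC t j (H n t (Suc j)) k y * f (y(k := q * y k)) = H n t j k y * f (y(k := q * y k))"
      using coef_step[of j n y k t] step by simp
  qed
  finally show ?case .
qed

lemma swp_comm: "Suc l < j \<Longrightarrow> swp j (swp l y) = swp l (swp j y)"
  by (auto simp: swp_def fun_eq_iff)

lemma hh_sop: assumes "symmetric_fn n f" "1 \<le> l" "Suc l < j" "j \<le> n"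
  shows "sop l (hh n q t f j) = hh n q t f j"
  using assms(4,3)
proof (induction j rule: inc_induct)
  case base
  have "Transposition.transpose l (Suc l) n = n" using base by simp
  then show ?case unfolding hh_n sop_swp tauop_def fun_eq_iff
    using sym_tau_swp[OF assms(1,2), where k=n and q=q] base by simp
next
  case (step j)
  have "sop l (Top t j g) = Top t j (sop l g)" for g
    using step(4) by (simp add: Top_swp sop_swp swp_comm[OF step(4)] fun_eq_iff)
  then show ?case unfolding hh_step[OF step(2)] using step by simp
qed

lemma hh_asc: assumes "t \<noteq> 0" "1 \<le> i" "i \<le> l" "l \<le> n"
  shows "eqd n (compose (map (Tinv t) (rev [i..<l])) (hh n q t f i)) (hh n q t f l)"
  using assms(3,4)
proof (induction l)
  case 0 then show ?case by (simp add: eqd_def)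
next
  case (Suc l)
  show ?case
  proof (cases "i = Suc l")
    case True then show ?thesis by (simp add: eqd_def)
  next
    case False
    then have il: "i \<le> l" using Suc by simp
    have "eqd n (compose (map (Tinv t) (rev [i..<Suc l])) (hh n q t f i)) (Tinv t l (hh n q t f l))"
      using il Suc assms(2) by (simp add: Tinv_cong)
    also have "eqd n (Tinv t l (hh n q t f l)) (hh n q t f (Suc l))"
    proof -
      have "hh n q t f l = Top t l (hh n q t f (Suc l))" using Suc by (simp add: hh_step)
      then show ?thesis unfolding eqd_def using Suc il assms
        by (auto intro!: Tinv_Top simp: dst_def)
    qed
    finally show ?thesis .
  qed
qed


lemma Tij_hh: assumes "symmetric_fn n f" "t \<noteq> 0" "1 \<le> i" "i < j" "j \<le> n"
  shows "eqd n (Tijinv t i j (hh n q t f i)) (\<lambda>y. inverse t ^ (j - 1 - i) * hh n q t f j y)"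
proof -
  have r: "rev [i..<j] = (j - 1) # rev [i..<j - 1]"
  proof -
    obtain j' where j': "j = Suc j'" using assms(4) by (cases j) auto
    then show ?thesis using assms(4) by simp
  qed
  have "eqd n (Tijinv t i j (hh n q t f i)) (compose (map (Tinv t) [i..<j - 1]) (compose (map (Tinv t) (rev [i..<j])) (hh n q t f i)))"
    unfolding Tijinv_def r by (rule eqd_eq) (simp only: compose_append list.map append.simps compose_Cons)
  also have "eqd n \<dots> (compose (map (Tinv t) [i..<j - 1]) (hh n q t f j))"
  proof (rule compose_Tinv_cong)
    show "\<forall>l\<in>set [i..<j - 1]. 1 \<le> l \<and> l < n"
    proof
      fix l assume "l \<in> set [i..<j - 1]"
      then have "i \<le> l" "l < j - 1" by auto
      then show "1 \<le> l \<and> l < n" using assms by linarith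
    qed
    show "eqd n (compose (map (Tinv t) (rev [i..<j])) (hh n q t f i)) (hh n q t f j)"
      by (rule hh_asc) (use assms in simp_all)
  qed
  also have "eqd n (compose (map (Tinv t) [i..<j - 1]) (hh n q t f j)) (\<lambda>y. inverse t ^ (j - 1 - i) * hh n q t f j y)"
  proof (rule eqd_eq, rule compose_Tinv_inv[OF assms(2)], rule ballI)
    fix l assume "l \<in> {i..<j - 1}"
    then have "i \<le> l" "l < j - 1" by auto
    then show "sop l (hh n q t f j) = hh n q t f j"
      using assms by (intro hh_sop[OF assms(1)]) linarith+
  qed
  finally show ?thesis .
qed




lemma sym_scale: "symmetric_fn n f \<Longrightarrow> symmetric_fn n (\<lambda>y. c * f y)"
  by (simp add: symmetric_fn_def)

lemma Yop_eq: assumes "symmetric_fn n f" "t \<noteq> 0" "1 \<le> i" "i \<le> n"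
  shows "Yop n q t i f = (\<lambda>y. t powi (int i - int n) * (inverse t ^ (i - 1) * hh n q t f i y))"
proof -
  have a: "compose (map (Tinv t) [1..<i]) f = (\<lambda>y. inverse t ^ (i - 1) * f y)"
  proof (rule compose_Tinv_inv[OF assms(2)], rule ballI)
    fix l assume "l \<in> {1..<i}"
    then show "sop l f = f" using assms by (intro sym_sop[OF assms(1)]) auto
  qed
  have b: "omega n q (\<lambda>y. inverse t ^ (i - 1) * f y) = (\<lambda>y. inverse t ^ (i - 1) * tauop q n f y)"
    using omega_eq[OF sym_scale[OF assms(1)]] assms by (simp add: tauop_def)
  have "compose (map (Top t) [i..<n] @ [omega n q] @ map (Tinv t) [1..<i]) f
      = compose (map (Top t) [i..<n]) (omega n q (compose (map (Tinv t) [1..<i]) f))"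
    by simp
  also have "\<dots> = (\<lambda>y. inverse t ^ (i - 1) * hh n q t f i y)"
    unfolding a b compose_Top_lin hh_def ..
  finally show ?thesis unfolding Yop_def by simp
qed

lemma Tijinv_lin: "Tijinv t i j (\<lambda>y. c * g y) = (\<lambda>y. c * Tijinv t i j g y)"
proof -
  have "\<And>g. Tijinv t i j g = compose (map (Tinv t) ([i..<j - 1] @ [j - 1] @ rev [i..<j - 1])) g"
    unfolding Tijinv_def by simp
  then show ?thesis by (simp only: compose_Tinv_lin)
qed

lemma K_one: fixes t :: "'a::field" assumes "t \<noteq> 0" "1 \<le> i" "i \<le> n"
  shows "t ^ (n - 1) * (t powi (int i - int n) * inverse t ^ (i - 1)) = 1"
proof -
  have e: "int i - int n = - int (n - i)" using assms by simp
  have a: "t powi (int i - int n) = inverse t ^ (n - i)"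
    unfolding e by (simp add: power_int_def nat_diff_distrib)
  have b: "inverse t ^ (n - i) * inverse t ^ (i - 1) = inverse t ^ (n - 1)"
  proof -
    have "n - i + (i - 1) = n - 1" using assms by simp
    moreover have "inverse t ^ (n - i) * inverse t ^ (i - 1) = inverse t ^ (n - i + (i - 1))"
      by (rule power_add[symmetric])
    ultimately show ?thesis by simp
  qed
  have c: "t ^ (n - 1) * inverse t ^ (n - 1) = 1"
  proof -
    have "t ^ (n - 1) * inverse t ^ (n - 1) = (t * inverse t) ^ (n - 1)" by (rule power_mult_distrib[symmetric])
    then show ?thesis using assms(1) by simp
  qed
  show ?thesis unfolding a b c by simp
qed

lemma mul4: fixes a b c d e r :: "'a::field" shows "c = d * e \<Longrightarrow> a * d = r \<Longrightarrow> a * (b * c) = b * r * e"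
  by (simp add: algebra_simps)

lemma alg1: fixes S K t S' Yv h T it :: "'a::field"
  shows "S = K*t*S' \<Longrightarrow> Yv = K*h \<Longrightarrow> T*(Yv + (it - 1)*S) = T*K*(h + (it-1)*t*S')"
  by (simp add: algebra_simps)

lemma alg2: fixes L T K h a S t :: "'a::field"
  shows "L = T*K*(h + a*S) \<Longrightarrow> T*K = 1 \<Longrightarrow> a = 1 - t \<Longrightarrow> L = h + (1-t)*S"
  by simp

lemma E_eq: assumes "symmetric_fn n f" "t \<noteq> 0" "1 \<le> i" "i \<le> n" "dst n y"
  shows "t ^ (n - 1) * (Yop n q t i f y + (inverse t - 1) *
           (\<Sum>j = Suc i..n. t ^ (j - i) * Tijinv t i j (Yop n q t i f) y))
       = hh n q t f i y + (1 - t) * (\<Sum>j = Suc i..n. hh n q t f j y)"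
proof -
  define K where "K = t powi (int i - int n) * inverse t ^ (i - 1)"
  have Y: "Yop n q t i f = (\<lambda>y. K * hh n q t f i y)"
    unfolding Yop_eq[OF assms(1-4)] K_def by (simp add: mult.assoc)
  have T: "t ^ (j - i) * Tijinv t i j (Yop n q t i f) y = K * t * hh n q t f j y"
    if j: "j \<in> {Suc i..n}" for j
  proof -
    have "Tijinv t i j (hh n q t f i) y = inverse t ^ (j - 1 - i) * hh n q t f j y"
      using Tij_hh[OF assms(1,2,3), of j q] j assms(5) by (auto simp: eqd_def)
    moreover have "t ^ (j - i) * inverse t ^ (j - 1 - i) = t"
    proof -
      have "j - i = Suc (j - 1 - i)" using j by auto
      then show ?thesis using assms(2) by (simp add: power_mult_distrib[symmetric])
    qed
    ultimately show ?thesis unfolding Y Tijinv_lin by (rule mul4)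
  qed
  have "t ^ (n - 1) * (Yop n q t i f y + (inverse t - 1) *
           (\<Sum>j = Suc i..n. t ^ (j - i) * Tijinv t i j (Yop n q t i f) y))
      = t ^ (n - 1) * K * (hh n q t f i y + (inverse t - 1) * t * (\<Sum>j = Suc i..n. hh n q t f j y))"
  proof -
    have "(\<Sum>j = Suc i..n. t ^ (j - i) * Tijinv t i j (Yop n q t i f) y) = (\<Sum>j = Suc i..n. K * t * hh n q t f j y)"
      using T by (rule sum.cong[OF refl])
    also have "\<dots> = K * t * (\<Sum>j = Suc i..n. hh n q t f j y)" by (simp only: sum_distrib_left)
    finally show ?thesis using alg1[OF _ fun_cong[OF Y]] by blast
  qed
  moreover have "t ^ (n - 1) * K = 1" unfolding K_def by (rule K_one[OF assms(2,3,4)])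
  moreover have "(inverse t - 1) * t = 1 - t" using assms(2) by (simp add: algebra_simps)
  ultimately show ?thesis by (rule alg2)
qed


definition Ec :: "nat \<Rightarrow> 'a::field \<Rightarrow> nat \<Rightarrow> nat \<Rightarrow> (nat \<Rightarrow> 'a) \<Rightarrow> 'a" where
  "Ec n t i k y = (if k = i then Acoef n t i (Suc i) y
      else if i < k \<and> k \<le> n then (t - 1) * y i / (y k - y i) * Acoef n t k (Suc i) y else 0)"

lemma H_zero: "k < j \<Longrightarrow> H n t j k y = 0"
  by (simp add: H_def)

lemma Hsum: assumes "1 \<le> a" "a \<le> k" "k \<le> n" "dst n y"
  shows "(\<Sum>j = a..n. H n t j k y) = Acoef n t k a y"
  using assms(2,1)
proof (induction a rule: inc_induct)
  case base
  have "(\<Sum>j = k..n. H n t j k y) = H n t k k y + (\<Sum>j = Suc k..n. H n t j k y)"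
    using assms(3) by (simp add: sum.atLeast_Suc_atMost)
  also have "(\<Sum>j = Suc k..n. H n t j k y) = 0" by (intro sum.neutral) (auto simp: H_def)
  finally show ?case by (simp add: H_def Acoef_skip)
next
  case (step a)
  have an: "a \<le> n" using step assms by simp
  have d: "y k - y a \<noteq> 0" using assms step by (auto simp: dst_def)
  have "(\<Sum>j = a..n. H n t j k y) = H n t a k y + (\<Sum>j = Suc a..n. H n t j k y)"
    using an by (simp add: sum.atLeast_Suc_atMost)
  also have "(\<Sum>j = Suc a..n. H n t j k y) = Acoef n t k (Suc a) y" using step by simp
  also have "H n t a k y = (t - 1) * y k / (y k - y a) * Acoef n t k (Suc a) y"
    using step assms by (simp add: H_def)
  also have "(t - 1) * y k / (y k - y a) * Acoef n t k (Suc a) y + Acoef n t k (Suc a) y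
      = (t * y k - y a) / (y k - y a) * Acoef n t k (Suc a) y"
    using d by (simp add: field_simps)
  also have "\<dots> = Acoef n t k a y" using an step by (simp add: Acoef_split)
  finally show ?case .
qed

lemma Ec_eq: assumes "1 \<le> i" "i \<le> n" "dst n y" "k \<in> {1..n}"
  shows "H n t i k y + (1 - t) * (\<Sum>j = Suc i..n. H n t j k y) = Ec n t i k y"
proof -
  consider "k < i" | "k = i" | "i < k" by linarith
  then show ?thesis
  proof cases
    case 1
    then have "(\<Sum>j = Suc i..n. H n t j k y) = 0" by (intro sum.neutral) (auto simp: H_def)
    then show ?thesis using 1 by (simp add: H_def Ec_def)
  next
    case 2
    then have "(\<Sum>j = Suc i..n. H n t j k y) = 0" by (intro sum.neutral) (auto simp: H_def)
    then show ?thesis using 2 by (simp add: H_def Ec_def)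
  next
    case 3
    have kn: "k \<le> n" using assms by simp
    have d: "y k - y i \<noteq> 0" using assms 3 by (auto simp: dst_def)
    have "(\<Sum>j = Suc i..n. H n t j k y) = Acoef n t k (Suc i) y"
      using 3 kn assms by (intro Hsum) auto
    moreover have "(t - 1) * y k / (y k - y i) * Z + (1 - t) * Z = (t - 1) * y i / (y k - y i) * Z" for Z
      using d by (simp add: field_simps)
    ultimately show ?thesis using 3 kn by (simp add: H_def Ec_def)
  qed
qed

lemma E_rep: assumes "symmetric_fn n f" "1 \<le> i" "i \<le> n" "dst n y"
  shows "hh n q t f i y + (1 - t) * (\<Sum>j = Suc i..n. hh n q t f j y)
     = (\<Sum>k\<in>{1..n}. Ec n t i k y * f (y(k := q * y k)))"
proof -
  let ?F = "\<lambda>k. f (y(k := q * y k))"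
  have r: "hh n q t f j y = (\<Sum>k\<in>{1..n}. H n t j k y * ?F k)" if "j \<in> {i..n}" for j
    using hh_rep[OF assms(1), of j q t] that assms by (auto simp: eqd_def rep_def)
  have "hh n q t f i y + (1 - t) * (\<Sum>j = Suc i..n. hh n q t f j y)
      = (\<Sum>k\<in>{1..n}. H n t i k y * ?F k) + (1 - t) * (\<Sum>j = Suc i..n. \<Sum>k\<in>{1..n}. H n t j k y * ?F k)"
    using r assms by simp
  also have "(\<Sum>j = Suc i..n. \<Sum>k\<in>{1..n}. H n t j k y * ?F k) = (\<Sum>k\<in>{1..n}. (\<Sum>j = Suc i..n. H n t j k y) * ?F k)"
    by (simp add: sum.swap[of _ "{Suc i..n}"] sum_distrib_right)
  also have "(\<Sum>k\<in>{1..n}. H n t i k y * ?F k) + (1 - t) * (\<Sum>k\<in>{1..n}. (\<Sum>j = Suc i..n. H n t j k y) * ?F k)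
      = (\<Sum>k\<in>{1..n}. (H n t i k y + (1 - t) * (\<Sum>j = Suc i..n. H n t j k y)) * ?F k)"
    by (simp add: sum.distrib sum_distrib_left algebra_simps)
  also have "\<dots> = (\<Sum>k\<in>{1..n}. Ec n t i k y * ?F k)"
    using Ec_eq[OF assms(2,3,4)] by (intro sum.cong) auto
  finally show ?thesis .
qed


lemma compose_Top_const: "compose (map (Top t) L) (\<lambda>_. c) = (\<lambda>_. t ^ length L * c)"
proof (induction L arbitrary: c)
  case Nil then show ?case by simp
next
  case (Cons a L)
  have "Top t a (\<lambda>_. t ^ length L * c) = (\<lambda>_. t * (t ^ length L * c))"
    by (rule Top_inv) (simp add: sop_def)
  then show ?case using Cons by (simp add: mult.assoc)
qed

lemma hh_const: "hh n q t (\<lambda>_. 1) j = (\<lambda>_. t ^ (n - j))"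
proof -
  have "tauop q n (\<lambda>_. 1::'a) = (\<lambda>_. 1)" by (simp add: tauop_def)
  then show ?thesis unfolding hh_def using compose_Top_const[of t "[j..<n]" 1] by simp
qed

lemma geo: fixes t :: "'a::field" assumes "i \<le> n"
  shows "t ^ (n - i) + (1 - t) * (\<Sum>j = Suc i..n. t ^ (n - j)) = 1"
  using assms
proof (induction i rule: inc_induct)
  case base then show ?case by simp
next
  case (step i)
  have "(\<Sum>j = Suc i..n. t ^ (n - j)) = t ^ (n - Suc i) + (\<Sum>j = Suc (Suc i)..n. t ^ (n - j))"
    using step by (simp add: sum.atLeast_Suc_atMost)
  moreover have "t ^ (n - i) = t * t ^ (n - Suc i)"
    using step by (metis Suc_diff_Suc power_Suc)
  moreover have "\<And>A S. t * A + (1 - t) * (A + S) = A + (1 - t) * S" by (simp add: algebra_simps)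
  ultimately show ?case using step(3) by simp
qed

lemma Ec_sum1: assumes "1 \<le> i" "i \<le> n" "dst n y"
  shows "(\<Sum>k\<in>{1..n}. Ec n t i k y) = 1"
proof -
  have s: "symmetric_fn n (\<lambda>_. 1::'a)" by (simp add: symmetric_fn_def)
  have "(\<Sum>k\<in>{1..n}. Ec n t i k y) = hh n q t (\<lambda>_. 1) i y + (1 - t) * (\<Sum>j = Suc i..n. hh n q t (\<lambda>_. 1) j y)"
    using E_rep[OF s assms(1,2,3), of q t] by simp
  also have "\<dots> = 1" unfolding hh_const using geo[OF assms(2)] .
  finally show ?thesis .
qed

lemma tele_alg: fixes t a b Z :: "'a::field" assumes "a \<noteq> 0" "b \<noteq> 0" "b - a \<noteq> 0"
  shows "inverse a * ((t - 1) * a / (b - a) * Z) + inverse b * Z = inverse b * ((t * b - a) / (b - a) * Z)"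
  using assms by (simp add: field_simps)

lemma tele: assumes "1 \<le> m" "k \<in> {1..n}" "dst n x" "\<forall>i\<in>{1..n}. x i \<noteq> 0"
  shows "(\<Sum>i = m..n. inverse (x i) * Ec n t i k x) = (if m \<le> k then inverse (x k) * Acoef n t k m x else 0)"
proof (cases "m \<le> k")
  case False
  then have "(\<Sum>i = m..n. inverse (x i) * Ec n t i k x) = 0" by (intro sum.neutral) (auto simp: Ec_def)
  then show ?thesis using False by simp
next
  case True
  have kn: "k \<le> n" using assms by simp
  have "(\<Sum>i = m..n. inverse (x i) * Ec n t i k x) = inverse (x k) * Acoef n t k m x"
    using True assms(1)
  proof (induction m rule: inc_induct)
    case base
    have "(\<Sum>i = k..n. inverse (x i) * Ec n t i k x) = inverse (x k) * Ec n t k k x + (\<Sum>i = Suc k..n. inverse (x i) * Ec n t i k x)"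
      using kn by (simp add: sum.atLeast_Suc_atMost)
    also have "(\<Sum>i = Suc k..n. inverse (x i) * Ec n t i k x) = 0" by (intro sum.neutral) (auto simp: Ec_def)
    finally show ?case by (simp add: Ec_def Acoef_skip)
  next
    case (step m)
    have mn: "m \<le> n" using step kn by simp
    have nz: "x m \<noteq> 0" "x k \<noteq> 0" "x k - x m \<noteq> 0" using assms step kn by (auto simp: dst_def)
    have "(\<Sum>i = m..n. inverse (x i) * Ec n t i k x) = inverse (x m) * Ec n t m k x + (\<Sum>i = Suc m..n. inverse (x i) * Ec n t i k x)"
      using mn by (simp add: sum.atLeast_Suc_atMost)
    also have "(\<Sum>i = Suc m..n. inverse (x i) * Ec n t i k x) = inverse (x k) * Acoef n t k (Suc m) x" using step by simp
    also have "Ec n t m k x = (t - 1) * x m / (x k - x m) * Acoef n t k (Suc m) x"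
      using step kn by (simp add: Ec_def)
    also have "inverse (x m) * ((t - 1) * x m / (x k - x m) * Acoef n t k (Suc m) x) + inverse (x k) * Acoef n t k (Suc m) x
       = inverse (x k) * ((t * x k - x m) / (x k - x m) * Acoef n t k (Suc m) x)"
      by (rule tele_alg[OF nz])
    also have "\<dots> = inverse (x k) * Acoef n t k m x" using mn step by (simp add: Acoef_split)
    finally show ?case .
  qed
  then show ?thesis using True by simp
qed


theorem lemma5p3:
  fixes q t :: "'a::field_char_0" and n m :: nat and f :: "'a fn" and x :: "nat \<Rightarrow> 'a"
  assumes "q \<noteq> 0" and "t \<noteq> 0"
    and "1 \<le> m" and "m \<le> n"
    and "laurent_poly n f" and "symmetric_fn n f"
    and "generic_point n q x"
  shows "(\<Sum>i = m..n. Dop n q t i f x)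
       = (\<Sum>i = m..n. Acoef n t i m x * inverse (x i) * (f x - tauop q i f x))"
proof -
  have nz: "\<forall>i\<in>{1..n}. x i \<noteq> 0" using assms(7) by (simp add: generic_point_def)
  have dx: "dst n x" unfolding dst_def
  proof (intro ballI impI)
    fix a b assume "a \<in> {1..n}" "b \<in> {1..n}" "a \<noteq> b"
    then have "x a \<noteq> q powi 0 * x b" using assms(7) unfolding generic_point_def by blast
    then show "x a \<noteq> x b" by simp
  qed
  let ?F = "\<lambda>k. f (x(k := q * x k))"
  let ?G = "\<lambda>k. f x - ?F k"
  have D: "Dop n q t i f x = (\<Sum>k\<in>{1..n}. inverse (x i) * Ec n t i k x * ?G k)" if i: "i \<in> {m..n}" for i
  proof -
    have i1: "1 \<le> i" "i \<le> n" using i assms(3) by auto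
    have a: "Dop n q t i f x = inverse (x i) * (f x - (\<Sum>k\<in>{1..n}. Ec n t i k x * ?F k))"
      unfolding Dop_def E_eq[OF assms(6,2) i1 dx] E_rep[OF assms(6) i1 dx] ..
    have b: "f x = (\<Sum>k\<in>{1..n}. Ec n t i k x * f x)"
      using Ec_sum1[OF i1 dx, of t] by (simp add: sum_distrib_right[symmetric])
    have c: "inverse (x i) * ((\<Sum>k\<in>{1..n}. Ec n t i k x * f x) - (\<Sum>k\<in>{1..n}. Ec n t i k x * ?F k))
       = (\<Sum>k\<in>{1..n}. inverse (x i) * Ec n t i k x * ?G k)"
      by (simp only: sum_subtractf[symmetric] sum_distrib_left) (simp add: algebra_simps)
    show ?thesis using a c b by simp
  qed
  have "(\<Sum>i = m..n. Dop n q t i f x) = (\<Sum>i = m..n. \<Sum>k\<in>{1..n}. inverse (x i) * Ec n t i k x * ?G k)"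
    using D by (rule sum.cong[OF refl])
  also have "\<dots> = (\<Sum>k\<in>{1..n}. (\<Sum>i = m..n. inverse (x i) * Ec n t i k x) * ?G k)"
    by (simp add: sum.swap[of _ "{m..n}"] sum_distrib_right)
  also have "\<dots> = (\<Sum>k\<in>{1..n}. (if m \<le> k then inverse (x k) * Acoef n t k m x * ?G k else 0))"
    using tele[OF assms(3) _ dx nz] by (intro sum.cong) auto
  also have "\<dots> = (\<Sum>k\<in>{k\<in>{1..n}. m \<le> k}. inverse (x k) * Acoef n t k m x * ?G k)"
    by (rule sum.inter_filter[symmetric]) simp
  also have "{k\<in>{1..n}. m \<le> k} = {m..n}" using assms(3) by auto
  finally have L: "(\<Sum>i = m..n. Dop n q t i f x) = (\<Sum>k = m..n. inverse (x k) * Acoef n t k m x * ?G k)" .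
  have R: "(\<Sum>i = m..n. Acoef n t i m x * inverse (x i) * (f x - tauop q i f x))
      = (\<Sum>k = m..n. inverse (x k) * Acoef n t k m x * ?G k)"
    by (intro sum.cong refl) (simp only: tauop_def mult.commute)
  show ?thesis unfolding R by (rule L)
qed

end
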